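(* There is an absolute constant $c$ such that for every instance of $P_n\,|\,\mathrm{conc}, p_j\le p\,|\,*$ with conflict graph $G$ on $n\ge 2$ jobs, there exists a feasible minimal schedule $C$ with $C_{\max}=\max_j C_j\le c\cdot tw(G)\cdot p\log n$ (i.e. $C_{\max}=O(tw(G)\cdot p\log n)$).
   Context: In $P_n\,|\,\mathrm{conc}, p_j\le p\,|\,*$, jobs $\{1,\dots,n\}$ have integer processing times $1\le p_j\le p$ and release time $0$; there is a conflict graph $G=(\{1,\dots,n\},E)$. A schedule $C:\{1,\dots,n\}\to\mathbb{N}$ is feasible if $C_j-p_j\ge 0$ for all $j$ and $[C_i-p_i,C_i)\cap[C_j-p_j,C_j)=\emptyset$ for all $\{i,j\}\in E$. A feasible schedule is minimal if decreasing the completion time of any job by any positive amount makes it infeasible. $tw(G)$ is the treewidth of $G$. *)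

theory Defs
  imports Complex_Main
begin

definition simple_graph :: "'a set \<Rightarrow> 'a set set \<Rightarrow> bool" where
  "simple_graph V E \<longleftrightarrow> finite V \<and>
     E \<subseteq> {{a, b} | a b. a \<in> V \<and> b \<in> V \<and> a \<noteq> b}"

definition graph_connected :: "'a set \<Rightarrow> 'a set set \<Rightarrow> bool" where
  "graph_connected V E \<longleftrightarrow>
     (\<forall>x\<in>V. \<forall>y\<in>V. (x, y) \<in> {(a, b). {a, b} \<in> E \<and> a \<in> V \<and> b \<in> V}\<^sup>*)"

definition is_tree :: "'a set \<Rightarrow> 'a set set \<Rightarrow> bool" where
  "is_tree N TE \<longleftrightarrow> N \<noteq> {} \<and> simple_graph N TE \<and> graph_connected N TE \<and>
     (\<forall>e\<in>TE. \<not> graph_connected N (TE - {e}))"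

definition tree_decomposition ::
  "'a set \<Rightarrow> 'a set set \<Rightarrow> nat set \<Rightarrow> nat set set \<Rightarrow> (nat \<Rightarrow> 'a set) \<Rightarrow> bool" where
  "tree_decomposition V E N TE B \<longleftrightarrow>
     is_tree N TE \<and>
     (\<forall>t\<in>N. B t \<subseteq> V) \<and>
     (\<forall>v\<in>V. \<exists>t\<in>N. v \<in> B t) \<and>
     (\<forall>e\<in>E. \<exists>t\<in>N. e \<subseteq> B t) \<and>
     (\<forall>v\<in>V. graph_connected {t\<in>N. v \<in> B t} {e\<in>TE. \<forall>t\<in>e. v \<in> B t})"

definition decomposition_width :: "nat set \<Rightarrow> (nat \<Rightarrow> 'a set) \<Rightarrow> nat" where
  "decomposition_width N B = Max (card ` B ` N) - 1"

definition treewidth :: "'a set \<Rightarrow> 'a set set \<Rightarrow> nat" where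
  "treewidth V E = (LEAST w. \<exists>N TE B. tree_decomposition V E N TE B \<and>
                                      w = decomposition_width N B)"

definition feasible_schedule ::
  "nat \<Rightarrow> (nat \<Rightarrow> nat) \<Rightarrow> nat set set \<Rightarrow> (nat \<Rightarrow> nat) \<Rightarrow> bool" where
  "feasible_schedule n pt E C \<longleftrightarrow>
     (\<forall>j\<in>{1..n}. pt j \<le> C j) \<and>
     (\<forall>i j. {i, j} \<in> E \<longrightarrow> {C i - pt i ..< C i} \<inter> {C j - pt j ..< C j} = {})"

text \<open>Minimal: decreasing the completion time of any job by any positive amount
  (staying in the naturals; otherwise infeasible trivially) gives an infeasible schedule.\<close>
definition minimal_schedule ::
  "nat \<Rightarrow> (nat \<Rightarrow> nat) \<Rightarrow> nat set set \<Rightarrow> (nat \<Rightarrow> nat) \<Rightarrow> bool" where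
  "minimal_schedule n pt E C \<longleftrightarrow> feasible_schedule n pt E C \<and>
     (\<forall>j\<in>{1..n}. \<forall>d. 0 < d \<and> d \<le> C j \<longrightarrow>
        \<not> feasible_schedule n pt E (C(j := C j - d)))"

definition makespan :: "nat \<Rightarrow> (nat \<Rightarrow> nat) \<Rightarrow> nat" where
  "makespan n C = Max (C ` {1..n})"

end

theory Submission
  imports Defs
begin


definition grel :: "'a set \<Rightarrow> 'a set set \<Rightarrow> ('a \<times> 'a) set" where
  "grel V F = {(a,b). {a,b} \<in> F \<and> a \<in> V \<and> b \<in> V}"

lemma gc_iff: "graph_connected V F \<longleftrightarrow> (\<forall>x\<in>V. \<forall>y\<in>V. (x,y) \<in> (grel V F)\<^sup>*)"
  by (simp add: graph_connected_def grel_def)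

lemma grel_conv: "(grel V F)\<inverse> = grel V F"
  by (auto simp: grel_def insert_commute)

lemma grel_sym: "(a,b) \<in> (grel V F)\<^sup>* \<Longrightarrow> (b,a) \<in> (grel V F)\<^sup>*"
  by (metis grel_conv rtrancl_converseI)

lemma grel_in: "(a,b) \<in> (grel V F)\<^sup>* \<Longrightarrow> a \<in> V \<Longrightarrow> b \<in> V"
  by (induction rule: rtrancl_induct) (auto simp: grel_def)

lemma edge_props: "simple_graph N TE \<Longrightarrow> {x,y} \<in> TE \<Longrightarrow> x \<in> N \<and> y \<in> N \<and> x \<noteq> y"
  unfolding simple_graph_def by (auto simp: doubleton_eq_iff)

lemma cycle_lemma:
  assumes "graph_connected V F" "{x,y} \<in> F" "(y,x) \<in> (grel V (F - {{x,y}}))\<^sup>*"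
  shows "graph_connected V (F - {{x,y}})"
proof -
  let ?R = "grel V (F - {{x,y}})"
  have xy: "(x,y) \<in> ?R\<^sup>*" using grel_sym[OF assms(3)] .
  have "grel V F \<subseteq> ?R\<^sup>*"
  proof
    fix q assume "q \<in> grel V F"
    then obtain a b where q: "q = (a,b)" "{a,b} \<in> F" "a\<in>V" "b\<in>V" by (auto simp: grel_def)
    show "q \<in> ?R\<^sup>*"
    proof (cases "{a,b} = {x,y}")
      case True
      then have "(a = x \<and> b = y) \<or> (a = y \<and> b = x)" by (simp add: doubleton_eq_iff)
      then show ?thesis
      proof
        assume "a = x \<and> b = y" then show ?thesis using xy q(1) by simp
      next
        assume "a = y \<and> b = x" then show ?thesis using assms(3) q(1) by simp
      qed
    next
      case False
      then have "(a,b) \<in> ?R" using q(2,3,4) by (simp add: grel_def)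
      then show ?thesis using q(1) by simp
    qed
  qed
  then have "(grel V F)\<^sup>* \<subseteq> ?R\<^sup>*" by (metis rtrancl_subset_rtrancl)
  then show ?thesis using assms(1) by (auto simp: gc_iff)
qed

lemma shortcut:
  assumes "graph_connected M F" "t' \<noteq> t" "\<forall>w. {t,w} \<in> F \<longrightarrow> w = t'"
  shows "graph_connected (M - {t}) (F - {{t,t'}})"
proof -
  let ?R = "grel M F" and ?R' = "grel (M - {t}) (F - {{t,t'}})"
  have key: "(x, if y = t then t' else y) \<in> ?R'\<^sup>*" if "(x,y) \<in> ?R\<^sup>*" "x \<in> M" "x \<noteq> t" for x y
    using that(1)
  proof (induction rule: rtrancl_induct)
    case base then show ?case using that by auto
  next
    case (step z y)
    then have zy: "{z,y} \<in> F" "z \<in> M" "y \<in> M" by (auto simp: grel_def)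
    show ?case
    proof (cases "y = t")
      case True
      then have "z = t'" using zy assms(3) by (auto simp: insert_commute)
      then show ?thesis using step.IH True assms(2) by auto
    next
      case yt: False
      show ?thesis
      proof (cases "z = t")
        case True
        then have "y = t'" using zy assms(3) by auto
        then show ?thesis using step.IH True yt by auto
      next
        case False
        then have "(z,y) \<in> ?R'" using zy yt by (auto simp: grel_def doubleton_eq_iff)
        then show ?thesis using step.IH False yt by (auto intro: rtrancl_into_rtrancl)
      qed
    qed
  qed
  show ?thesis unfolding gc_iff
  proof (intro ballI)
    fix x y assume "x \<in> M - {t}" "y \<in> M - {t}"
    then show "(x,y) \<in> ?R'\<^sup>*" using key[of x y] assms(1) by (auto simp: gc_iff)
  qed
qed

lemma add_leaf:
  assumes "graph_connected M F" "t' \<in> M"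
  shows "graph_connected (insert t M) (insert {t,t'} F)"
proof -
  let ?R = "grel M F" and ?R' = "grel (insert t M) (insert {t,t'} F)"
  have sub: "?R\<^sup>* \<subseteq> ?R'\<^sup>*" by (rule rtrancl_mono) (auto simp: grel_def)
  have e1: "(t,t') \<in> ?R'\<^sup>*" and e2: "(t',t) \<in> ?R'\<^sup>*" using assms(2)
    by (auto simp: grel_def insert_commute intro!: r_into_rtrancl)
  have m: "(x,y) \<in> ?R'\<^sup>*" if "x \<in> M" "y \<in> M" for x y using that assms(1) sub by (auto simp: gc_iff)
  show ?thesis unfolding gc_iff
  proof (intro ballI)
    fix x y assume x: "x \<in> insert t M" and y: "y \<in> insert t M"
    show "(x,y) \<in> ?R'\<^sup>*"
    proof (cases "x = t")
      case True
      show ?thesis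
      proof (cases "y = t")
        case True with \<open>x = t\<close> show ?thesis by auto
      next
        case False then have "y \<in> M" using y by auto
        then show ?thesis using True e1 m[of t' y] assms(2) rtrancl_trans by metis
      qed
    next
      case False then have xM: "x \<in> M" using x by auto
      show ?thesis
      proof (cases "y = t")
        case True then show ?thesis using xM e2 m[of x t'] assms(2) rtrancl_trans by metis
      next
        case False then show ?thesis using xM y m by auto
      qed
    qed
  qed
qed

lemma tree_remove_leaf:
  assumes "is_tree N TE" "t \<in> N" "t' \<in> N" "t \<noteq> t'" "{t,t'} \<in> TE" "\<forall>w. {t,w} \<in> TE \<longrightarrow> w = t'"
  shows "is_tree (N - {t}) (TE - {{t,t'}})"
proof -
  have sg: "simple_graph N TE" and gc: "graph_connected N TE"
    and mn: "\<forall>e\<in>TE. \<not> graph_connected N (TE - {e})" and fin: "finite N"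
    using assms(1) by (auto simp: is_tree_def simple_graph_def)
  have sg': "simple_graph (N - {t}) (TE - {{t,t'}})"
    unfolding simple_graph_def
  proof (intro conjI subsetI)
    show "finite (N - {t})" using fin by auto
    fix e assume e: "e \<in> TE - {{t,t'}}"
    then obtain a b where ab: "e = {a,b}" "a \<in> N" "b \<in> N" "a \<noteq> b"
      using sg unfolding simple_graph_def by blast
    have "a \<noteq> t" using e ab assms(6) by auto
    moreover have "b \<noteq> t" using e ab assms(6) by (auto simp: insert_commute)
    ultimately show "e \<in> {{a, b} |a b. a \<in> N - {t} \<and> b \<in> N - {t} \<and> a \<noteq> b}" using ab by blast
  qed
  have gc': "graph_connected (N - {t}) (TE - {{t,t'}})" using shortcut[OF gc] assms(4,6) by auto
  have mn': "\<not> graph_connected (N - {t}) (TE - {{t,t'}} - {e})" if e: "e \<in> TE - {{t,t'}}" for e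
  proof
    assume "graph_connected (N - {t}) (TE - {{t,t'}} - {e})"
    moreover have "t' \<in> N - {t}" using assms(3,4) by simp
    ultimately have "graph_connected (insert t (N - {t})) (insert {t,t'} (TE - {{t,t'}} - {e}))"
      by (rule add_leaf)
    moreover have "insert t (N - {t}) = N" using assms(2) by auto
    moreover have "insert {t,t'} (TE - {{t,t'}} - {e}) = TE - {e}" using e assms(5) by blast
    ultimately have "graph_connected N (TE - {e})" by simp
    then show False using mn e by blast
  qed
  show ?thesis unfolding is_tree_def using sg' gc' mn' assms(3,4) by auto
qed

lemma leaf_exists:
  assumes "is_tree N TE" "2 \<le> card N"
  shows "\<exists>t t'. t \<in> N \<and> t' \<in> N \<and> t \<noteq> t' \<and> {t,t'} \<in> TE \<and> (\<forall>w. {t,w} \<in> TE \<longrightarrow> w = t')"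
proof -
  have sg: "simple_graph N TE" and gc: "graph_connected N TE"
    and mn: "\<forall>e\<in>TE. \<not> graph_connected N (TE - {e})" and fin: "finite N"
    using assms(1) by (auto simp: is_tree_def simple_graph_def)
  define S where "S x y = {z. (y,z) \<in> (grel N (TE - {{x,y}}))\<^sup>*}" for x y
  have A: "x \<notin> S x y" if "{x,y} \<in> TE" for x y
  proof
    assume "x \<in> S x y"
    then have "(y,x) \<in> (grel N (TE - {{x,y}}))\<^sup>*" by (simp add: S_def)
    then have "graph_connected N (TE - {{x,y}})" by (rule cycle_lemma[OF gc that])
    then show False using mn that by blast
  qed
  have Ssub: "S x y \<subseteq> N" if "y \<in> N" for x y using grel_in that by (auto simp: S_def)
  have B: "card (S y w) < card (S x y)" if xy: "{x,y} \<in> TE" and yw: "{y,w} \<in> TE" and wx: "w \<noteq> x" for x y w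
  proof -
    have yN: "y \<in> N" and wN: "w \<in> N" and ywne: "y \<noteq> w"
      using edge_props[OF sg xy] edge_props[OF sg yw] by auto
    let ?R1 = "grel N (TE - {{y,w}})" and ?R2 = "grel N (TE - {{x,y}})"
    have ny: "y \<notin> S y w" using A[OF yw] .
    have c: "(w,z) \<in> ?R2\<^sup>*" if "(w,z) \<in> ?R1\<^sup>*" for z
      using that
    proof (induction rule: rtrancl_induct)
      case base then show ?case by simp
    next
      case (step z z')
      have "z \<noteq> y" using step.hyps(1) ny by (auto simp: S_def)
      moreover have "z' \<noteq> y" using step.hyps(1,2) ny by (auto simp: S_def intro: rtrancl_into_rtrancl)
      ultimately have "(z,z') \<in> ?R2" using step.hyps(2) by (auto simp: grel_def doubleton_eq_iff)
      with step.IH show ?case by (rule rtrancl_into_rtrancl)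
    qed
    have "(y,w) \<in> ?R2" using yw wx ywne yN wN by (auto simp: grel_def doubleton_eq_iff)
    then have sub: "S y w \<subseteq> S x y" using c by (auto simp: S_def intro: converse_rtrancl_into_rtrancl)
    have "y \<in> S x y" by (simp add: S_def)
    then have "S y w \<subset> S x y" using sub ny by blast
    moreover have "finite (S x y)" using Ssub[OF yN] fin finite_subset by blast
    ultimately show ?thesis by (simp add: psubset_card_mono)
  qed
  have "\<not> card N \<le> Suc 0" using assms(2) by simp
  then obtain a b where ab: "a \<in> N" "b \<in> N" "a \<noteq> b" using card_le_Suc0_iff_eq[OF fin] by blast
  then have "(a,b) \<in> (grel N TE)\<^sup>*" using gc by (auto simp: gc_iff)
  then obtain c where "(a,c) \<in> grel N TE" using ab(3) by (cases rule: converse_rtranclE) auto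
  then have e0: "{a,c} \<in> TE" by (simp add: grel_def)
  obtain q where q: "{fst q, snd q} \<in> TE"
    and minq: "\<forall>q'. {fst q', snd q'} \<in> TE \<longrightarrow> card (S (fst q) (snd q)) \<le> card (S (fst q') (snd q'))"
    using ex_has_least_nat[of "\<lambda>q. {fst q, snd q} \<in> TE" "(a,c)" "\<lambda>q. card (S (fst q) (snd q))"] e0 by auto
  obtain x y where qq: "q = (x,y)" by (cases q)
  have xy: "{x,y} \<in> TE" using q qq by simp
  have "\<forall>w. {y,w} \<in> TE \<longrightarrow> w = x"
  proof (intro allI impI)
    fix w assume yw: "{y,w} \<in> TE"
    show "w = x"
    proof (rule ccontr)
      assume "w \<noteq> x"
      then have "card (S y w) < card (S x y)" using B[OF xy yw] by blast
      moreover have "card (S x y) \<le> card (S y w)" using minq[rule_format, of "(y,w)"] yw qq by simp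
      ultimately show False by simp
    qed
  qed
  moreover have "{y,x} \<in> TE" using xy by (simp add: insert_commute)
  moreover have "x \<in> N" "y \<in> N" "y \<noteq> x" using edge_props[OF sg xy] by auto
  ultimately show ?thesis by blast
qed



lemma degen:
  assumes "is_tree N TE" "finite S" "S \<noteq> {}"
    "\<forall>v\<in>S. \<exists>t\<in>N. v \<in> B t"
    "\<forall>u\<in>S. \<forall>v\<in>S. {u,v} \<in> E \<longrightarrow> (\<exists>t\<in>N. u \<in> B t \<and> v \<in> B t)"
    "\<forall>v\<in>S. graph_connected {t\<in>N. v \<in> B t} {e\<in>TE. \<forall>t\<in>e. v \<in> B t}"
    "\<forall>t\<in>N. card (B t \<inter> S) \<le> k + 1"
    "\<forall>v. {v} \<notin> E"
  shows "\<exists>v\<in>S. card {u\<in>S. {u,v} \<in> E} \<le> k"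
  using assms
proof (induction "card N" arbitrary: N TE rule: less_induct)
  case less
  have fin: "finite N" using less.prems(1) by (auto simp: is_tree_def simple_graph_def)
  have single: "\<exists>v\<in>S. card {u\<in>S. {u,v} \<in> E} \<le> k"
    if t: "t \<in> N" and v: "v \<in> S" "v \<in> B t" and only: "\<forall>s\<in>N. v \<in> B s \<longrightarrow> s = t" for t v
  proof -
    have "{u\<in>S. {u,v} \<in> E} \<subseteq> B t \<inter> S"
    proof
      fix u assume u: "u \<in> {u\<in>S. {u,v} \<in> E}"
      then obtain s where "s \<in> N" "u \<in> B s" "v \<in> B s" using less.prems(5) v(1) by blast
      then show "u \<in> B t \<inter> S" using only u by auto
    qed
    then have sub: "insert v {u\<in>S. {u,v} \<in> E} \<subseteq> B t \<inter> S" using v by blast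
    have nv: "v \<notin> {u\<in>S. {u,v} \<in> E}" using less.prems(8) by simp
    have fS: "finite (B t \<inter> S)" using less.prems(2) by simp
    have "card (insert v {u\<in>S. {u,v} \<in> E}) \<le> card (B t \<inter> S)" by (rule card_mono[OF fS sub])
    moreover have "card (insert v {u\<in>S. {u,v} \<in> E}) = card {u\<in>S. {u,v} \<in> E} + 1"
      using nv less.prems(2) by simp
    moreover have "card (B t \<inter> S) \<le> k + 1" using less.prems(7) t by blast
    ultimately have "card {u\<in>S. {u,v} \<in> E} \<le> k" by linarith
    then show ?thesis using v(1) by blast
  qed
  show ?case
  proof (cases "2 \<le> card N")
    case False
    have "N \<noteq> {}" using less.prems(1) by (simp add: is_tree_def)
    then obtain t where t: "t \<in> N" by blast
    have all: "\<forall>s\<in>N. s = t" using False t fin card_le_Suc0_iff_eq[OF fin] by auto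
    obtain v where v: "v \<in> S" using less.prems(3) by blast
    then obtain t0 where "t0 \<in> N" "v \<in> B t0" using less.prems(4) by blast
    then have "v \<in> B t" using all by auto
    then show ?thesis using single[OF t v] all by blast
  next
    case True
    obtain t t' where leaf: "t \<in> N" "t' \<in> N" "t \<noteq> t'" "{t,t'} \<in> TE" "\<forall>w. {t,w} \<in> TE \<longrightarrow> w = t'"
      using leaf_exists[OF less.prems(1) True] by blast
    show ?thesis
    proof (cases "\<exists>v\<in>S. v \<in> B t \<and> v \<notin> B t'")
      case True
      then obtain v where v: "v \<in> S" "v \<in> B t" "v \<notin> B t'" by blast
      have only: "\<forall>s\<in>N. v \<in> B s \<longrightarrow> s = t"
      proof (intro ballI impI)
        fix s assume s: "s \<in> N" "v \<in> B s"
        let ?R = "grel {t\<in>N. v \<in> B t} {e\<in>TE. \<forall>t\<in>e. v \<in> B t}"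
        have "(t,s) \<in> ?R\<^sup>*" using less.prems(6) v s leaf(1) by (auto simp: gc_iff)
        then show "s = t"
        proof (cases rule: converse_rtranclE)
          case base then show ?thesis by simp
        next
          case (step w)
          then have "{t,w} \<in> TE" "v \<in> B w" by (auto simp: grel_def)
          then show ?thesis using leaf(5) v(3) by blast
        qed
      qed
      show ?thesis using single[OF leaf(1) v(1,2) only] .
    next
      case False
      then have sub: "B t \<inter> S \<subseteq> B t'" by blast
      let ?N = "N - {t}" and ?TE = "TE - {{t,t'}}"
      have c: "card ?N < card N" by (rule card_Diff1_less[OF fin leaf(1)])
      have tr: "is_tree ?N ?TE" using tree_remove_leaf[OF less.prems(1) leaf] .
      have h4: "\<forall>v\<in>S. \<exists>s\<in>?N. v \<in> B s"
      proof
        fix v assume v: "v \<in> S"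
        then obtain s where "s \<in> N" "v \<in> B s" using less.prems(4) by blast
        then show "\<exists>s\<in>?N. v \<in> B s" using sub v leaf(2,3) by (cases "s = t") auto
      qed
      have h5: "\<forall>u\<in>S. \<forall>v\<in>S. {u,v} \<in> E \<longrightarrow> (\<exists>s\<in>?N. u \<in> B s \<and> v \<in> B s)"
      proof (intro ballI impI)
        fix u v assume uv: "u \<in> S" "v \<in> S" "{u,v} \<in> E"
        then obtain s where "s \<in> N" "u \<in> B s" "v \<in> B s" using less.prems(5) by blast
        then show "\<exists>s\<in>?N. u \<in> B s \<and> v \<in> B s" using sub uv leaf(2,3) by (cases "s = t") auto
      qed
      have h6: "\<forall>v\<in>S. graph_connected {s\<in>?N. v \<in> B s} {e\<in>?TE. \<forall>x\<in>e. v \<in> B x}"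
      proof
        fix v assume v: "v \<in> S"
        have g: "graph_connected {s\<in>N. v \<in> B s} {e\<in>TE. \<forall>x\<in>e. v \<in> B x}" using less.prems(6) v by blast
        have lf: "\<forall>w. {t,w} \<in> {e\<in>TE. \<forall>x\<in>e. v \<in> B x} \<longrightarrow> w = t'" using leaf(5) by blast
        have "graph_connected ({s\<in>N. v \<in> B s} - {t}) ({e\<in>TE. \<forall>x\<in>e. v \<in> B x} - {{t,t'}})"
          using shortcut[OF g _ lf] leaf(3) by blast
        moreover have "{s\<in>N. v \<in> B s} - {t} = {s\<in>?N. v \<in> B s}" by blast
        moreover have "{e\<in>TE. \<forall>x\<in>e. v \<in> B x} - {{t,t'}} = {e\<in>?TE. \<forall>x\<in>e. v \<in> B x}" by blast
        ultimately show "graph_connected {s\<in>?N. v \<in> B s} {e\<in>?TE. \<forall>x\<in>e. v \<in> B x}" by simp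
      qed
      have h7: "\<forall>s\<in>?N. card (B s \<inter> S) \<le> k + 1" using less.prems(7) by blast
      show ?thesis using less.hyps[OF c tr less.prems(2,3) h4 h5 h6 h7 less.prems(8)] .
    qed
  qed
qed



lemma sched:
  assumes "finite S"
    "\<forall>j\<in>S. 1 \<le> pt j \<and> pt j \<le> p"
    "\<forall>T\<subseteq>S. T \<noteq> {} \<longrightarrow> (\<exists>v\<in>T. card {u\<in>T. {u,v} \<in> E} \<le> k)"
    "\<forall>v. {v} \<notin> E"
  shows "\<exists>C. (\<forall>j\<in>S. pt j \<le> C j \<and> C j \<le> (2*k+1)*p) \<and>
   (\<forall>i\<in>S. \<forall>j\<in>S. {i,j} \<in> E \<longrightarrow> {C i - pt i..<C i} \<inter> {C j - pt j..<C j} = {}) \<and>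
   (\<forall>j\<in>S. \<forall>c<C j. c < pt j \<or> (\<exists>i\<in>S. {i,j} \<in> E \<and> {c - pt j..<c} \<inter> {C i - pt i..<C i} \<noteq> {}))"
  using assms
proof (induction "card S" arbitrary: S rule: less_induct)
  case less
  show ?case
  proof (cases "S = {}")
    case True then show ?thesis by auto
  next
    case False
    obtain v where v: "v \<in> S" and dv: "card {u\<in>S. {u,v} \<in> E} \<le> k"
      using less.prems(3) False by blast
    let ?S = "S - {v}"
    have c: "card ?S < card S" by (rule card_Diff1_less[OF less.prems(1) v])
    have p3: "\<forall>T\<subseteq>?S. T \<noteq> {} \<longrightarrow> (\<exists>v\<in>T. card {u\<in>T. {u,v} \<in> E} \<le> k)"
      using less.prems(3) by blast
    obtain C0 where C0a: "\<forall>j\<in>?S. pt j \<le> C0 j \<and> C0 j \<le> (2*k+1)*p"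
      and C0b: "\<forall>i\<in>?S. \<forall>j\<in>?S. {i,j} \<in> E \<longrightarrow> {C0 i - pt i..<C0 i} \<inter> {C0 j - pt j..<C0 j} = {}"
      and C0c: "\<forall>j\<in>?S. \<forall>c<C0 j. c < pt j \<or> (\<exists>i\<in>?S. {i,j} \<in> E \<and> {c - pt j..<c} \<inter> {C0 i - pt i..<C0 i} \<noteq> {})"
      using less.hyps[OF c _ _ p3 less.prems(4)] less.prems(1,2) by auto
    define Nb where "Nb = {i\<in>S. {i,v} \<in> E}"
    have Nbsub: "Nb \<subseteq> ?S" using less.prems(4) by (auto simp: Nb_def)
    have finNb: "finite Nb" using less.prems(1) by (simp add: Nb_def)
    have cNb: "card Nb \<le> k" using dv by (simp add: Nb_def)
    define good where "good c \<longleftrightarrow> pt v \<le> c \<and> (\<forall>i\<in>Nb. {c - pt v..<c} \<inter> {C0 i - pt i..<C0 i} = {})" for c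
    define Bl where "Bl i = {C0 i - pt i + 1..<C0 i + pt v}" for i
    have blk: "good c" if c1: "pt v \<le> c" and c2: "c \<notin> (\<Union>i\<in>Nb. Bl i)" for c
      unfolding good_def
    proof (intro conjI c1 ballI)
      fix i assume i: "i \<in> Nb"
      have "pt i \<le> C0 i" using C0a Nbsub i by blast
      show "{c - pt v..<c} \<inter> {C0 i - pt i..<C0 i} = {}"
      proof (rule ccontr)
        assume "{c - pt v..<c} \<inter> {C0 i - pt i..<C0 i} \<noteq> {}"
        then have "c - pt v < C0 i" "C0 i - pt i < c" by auto
        then have "c \<in> Bl i" using c1 \<open>pt i \<le> C0 i\<close> by (auto simp: Bl_def)
        then show False using c2 i by blast
      qed
    qed
    have pv: "1 \<le> pt v" "pt v \<le> p" using less.prems(2) v by auto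
    have cardBl: "card (Bl i) \<le> 2*p - 1" if i: "i \<in> Nb" for i
    proof -
      have "pt i \<le> C0 i" "1 \<le> pt i" "pt i \<le> p" using C0a Nbsub i less.prems(2) by auto
      then show ?thesis using pv by (simp add: Bl_def)
    qed
    have cardU: "card (\<Union>i\<in>Nb. Bl i) \<le> k*(2*p-1)"
    proof -
      have "card (\<Union>i\<in>Nb. Bl i) \<le> (\<Sum>i\<in>Nb. card (Bl i))" by (rule card_UN_le[OF finNb])
      also have "\<dots> \<le> (\<Sum>i\<in>Nb. 2*p-1)" using cardBl by (rule sum_mono)
      also have "\<dots> = card Nb * (2*p-1)" by simp
      also have "\<dots> \<le> k*(2*p-1)" using cNb by (rule mult_right_mono) simp
      finally show ?thesis .
    qed
    have finU: "finite (\<Union>i\<in>Nb. Bl i)" using finNb by (simp add: Bl_def)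
    have "\<exists>c\<in>{pt v..pt v + k*(2*p-1)}. c \<notin> (\<Union>i\<in>Nb. Bl i)"
    proof (rule ccontr)
      assume "\<not> ?thesis"
      then have "{pt v..pt v + k*(2*p-1)} \<subseteq> (\<Union>i\<in>Nb. Bl i)" by blast
      then have "card {pt v..pt v + k*(2*p-1)} \<le> card (\<Union>i\<in>Nb. Bl i)" by (rule card_mono[OF finU])
      then show False using cardU by simp
    qed
    then obtain c0 where c0: "pt v \<le> c0" "c0 \<le> pt v + k*(2*p-1)" "c0 \<notin> (\<Union>i\<in>Nb. Bl i)" by auto
    have g0: "good c0" using blk c0 by blast
    define cv where "cv = (LEAST c. good c)"
    have gcv: "good cv" unfolding cv_def by (rule LeastI[of good, OF g0])
    have "cv \<le> c0" unfolding cv_def by (rule Least_le[of good, OF g0])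
    have "k*(2*p-1) \<le> k*(2*p)" by simp
    then have cvb: "cv \<le> (2*k+1)*p" using \<open>cv \<le> c0\<close> c0(2) pv(2) by (simp add: algebra_simps)
    define C where "C = C0(v := cv)"
    have Cv: "C v = cv" and Co: "\<And>j. j \<noteq> v \<Longrightarrow> C j = C0 j" by (auto simp: C_def)
    have nbv: "i \<in> Nb" if "i \<in> S" "{i,v} \<in> E" for i using that by (simp add: Nb_def)
    have P1: "\<forall>j\<in>S. pt j \<le> C j \<and> C j \<le> (2*k+1)*p"
    proof
      fix j assume j: "j \<in> S"
      show "pt j \<le> C j \<and> C j \<le> (2*k+1)*p"
      proof (cases "j = v")
        case True then show ?thesis using gcv cvb Cv by (simp add: good_def)
      next
        case False then show ?thesis using C0a j Co[OF False] by simp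
      qed
    qed
    have P2: "\<forall>i\<in>S. \<forall>j\<in>S. {i,j} \<in> E \<longrightarrow> {C i - pt i..<C i} \<inter> {C j - pt j..<C j} = {}"
    proof (intro ballI impI)
      fix i j assume ij: "i \<in> S" "j \<in> S" "{i,j} \<in> E"
      show "{C i - pt i..<C i} \<inter> {C j - pt j..<C j} = {}"
      proof (cases "i = v")
        case True
        then have "j \<noteq> v" using ij less.prems(4) by auto
        have "j \<in> Nb" using nbv ij True by (simp add: insert_commute)
        then show ?thesis using gcv True \<open>j \<noteq> v\<close> Cv Co by (auto simp: good_def)
      next
        case iv: False
        show ?thesis
        proof (cases "j = v")
          case True
          have "i \<in> Nb" using nbv ij True by simp
          then show ?thesis using gcv True iv Cv Co by (auto simp: good_def)
        next
          case False
          then show ?thesis using C0b ij iv Co by auto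
        qed
      qed
    qed
    have P3: "\<forall>j\<in>S. \<forall>c<C j. c < pt j \<or> (\<exists>i\<in>S. {i,j} \<in> E \<and> {c - pt j..<c} \<inter> {C i - pt i..<C i} \<noteq> {})"
    proof (intro ballI allI impI)
      fix j c assume j: "j \<in> S" and cj: "c < C j"
      show "c < pt j \<or> (\<exists>i\<in>S. {i,j} \<in> E \<and> {c - pt j..<c} \<inter> {C i - pt i..<C i} \<noteq> {})"
      proof (cases "j = v")
        case True
        then have "c < cv" using cj Cv by simp
        then have "\<not> good c" unfolding cv_def by (rule not_less_Least)
        then have "c < pt v \<or> (\<exists>i\<in>Nb. {c - pt v..<c} \<inter> {C0 i - pt i..<C0 i} \<noteq> {})"
          by (auto simp: good_def)
        then show ?thesis
        proof
          assume "c < pt v" then show ?thesis using True by simp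
        next
          assume "\<exists>i\<in>Nb. {c - pt v..<c} \<inter> {C0 i - pt i..<C0 i} \<noteq> {}"
          then obtain i where i: "i \<in> Nb" "{c - pt v..<c} \<inter> {C0 i - pt i..<C0 i} \<noteq> {}" by blast
          have "i \<noteq> v" using i(1) Nbsub by blast
          then show ?thesis using i True Co by (auto simp: Nb_def)
        qed
      next
        case False
        then have "c < C0 j" using cj Co by simp
        then have "c < pt j \<or> (\<exists>i\<in>?S. {i,j} \<in> E \<and> {c - pt j..<c} \<inter> {C0 i - pt i..<C0 i} \<noteq> {})"
          using C0c j False by blast
        then show ?thesis using Co by auto
      qed
    qed
    show ?thesis using P1 P2 P3 by blast
  qed
qed



theorem lemma6:
  "\<exists>c::real. \<forall>n::nat. \<forall>p::nat. \<forall>pt::nat \<Rightarrow> nat. \<forall>E::nat set set.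
     2 \<le> n \<longrightarrow> simple_graph {1..n} E \<longrightarrow> (\<forall>j\<in>{1..n}. 1 \<le> pt j \<and> pt j \<le> p) \<longrightarrow>
     (\<exists>C. minimal_schedule n pt E C \<and>
          real (makespan n C) \<le> c * real (treewidth {1..n} E + 1) * real p * log 2 (real n))"
proof (intro exI[of _ 2] allI impI)
  fix n p :: nat and pt :: "nat \<Rightarrow> nat" and E :: "nat set set"
  assume n2: "2 \<le> n" and sg: "simple_graph {1..n} E" and ptb: "\<forall>j\<in>{1..n}. 1 \<le> pt j \<and> pt j \<le> p"
  have Esub: "\<And>e. e \<in> E \<Longrightarrow> e \<subseteq> {1..n}" using sg unfolding simple_graph_def by blast
  have noloop: "\<forall>v. {v} \<notin> E"
  proof (intro allI notI)
    fix v assume "{v} \<in> E"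
    then obtain a b where "{v} = {a,b}" "a \<noteq> b" using sg unfolding simple_graph_def by blast
    then show False by (auto simp: doubleton_eq_iff)
  qed
  have Ein: "i \<in> {1..n} \<and> j \<in> {1..n}" if "{i,j} \<in> E" for i j using Esub[OF that] by auto
  have td0: "tree_decomposition {1..n} E {0} {} (\<lambda>_. {1..n})"
    unfolding tree_decomposition_def is_tree_def simple_graph_def graph_connected_def
    using Esub by auto
  let ?P = "\<lambda>w. \<exists>N TE B. tree_decomposition {1..n} E N TE B \<and> w = decomposition_width N B"
  have "?P (decomposition_width {0::nat} (\<lambda>_. {1..n}))" using td0 by blast
  then have "?P (treewidth {1..n} E)" unfolding treewidth_def by (rule LeastI)
  then obtain N TE B where td: "tree_decomposition {1..n} E N TE B"
    and kw: "treewidth {1..n} E = decomposition_width N B" by blast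
  define k where "k = treewidth {1..n} E"
  have tr: "is_tree N TE" using td by (simp add: tree_decomposition_def)
  have finN: "finite N" using tr by (simp add: is_tree_def simple_graph_def)
  have cardB: "card (B t) \<le> k + 1" if t: "t \<in> N" for t
  proof -
    have "card (B t) \<le> Max (card ` B ` N)" using finN t by (simp add: Max_ge)
    then show ?thesis using kw by (simp add: k_def decomposition_width_def)
  qed
  have Bsub: "\<forall>t\<in>N. B t \<subseteq> {1..n}" using td by (simp add: tree_decomposition_def)
  have deg: "\<forall>T\<subseteq>{1..n}. T \<noteq> {} \<longrightarrow> (\<exists>v\<in>T. card {u\<in>T. {u,v} \<in> E} \<le> k)"
  proof (intro allI impI)
    fix T assume T: "T \<subseteq> {1..n}" "T \<noteq> {}"
    have fT: "finite T" using T(1) finite_subset by blast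
    have h4: "\<forall>v\<in>T. \<exists>t\<in>N. v \<in> B t" using td T(1) by (auto simp: tree_decomposition_def)
    have h5: "\<forall>u\<in>T. \<forall>v\<in>T. {u,v} \<in> E \<longrightarrow> (\<exists>t\<in>N. u \<in> B t \<and> v \<in> B t)"
    proof (intro ballI impI)
      fix u v assume "u \<in> T" "v \<in> T" "{u,v} \<in> E"
      then obtain t where "t \<in> N" "{u,v} \<subseteq> B t" using td by (auto simp: tree_decomposition_def)
      then show "\<exists>t\<in>N. u \<in> B t \<and> v \<in> B t" by blast
    qed
    have h6: "\<forall>v\<in>T. graph_connected {t\<in>N. v \<in> B t} {e\<in>TE. \<forall>t\<in>e. v \<in> B t}"
      using td T(1) by (auto simp: tree_decomposition_def)
    have h7: "\<forall>t\<in>N. card (B t \<inter> T) \<le> k + 1"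
    proof
      fix t assume t: "t \<in> N"
      have "finite (B t)" using Bsub t finite_subset by blast
      then have "card (B t \<inter> T) \<le> card (B t)" by (simp add: card_mono)
      then show "card (B t \<inter> T) \<le> k + 1" using cardB[OF t] by linarith
    qed
    show "\<exists>v\<in>T. card {u\<in>T. {u,v} \<in> E} \<le> k" by (rule degen[OF tr fT T(2) h4 h5 h6 h7 noloop])
  qed
  obtain C where C1: "\<forall>j\<in>{1..n}. pt j \<le> C j \<and> C j \<le> (2*k+1)*p"
    and C2: "\<forall>i\<in>{1..n}. \<forall>j\<in>{1..n}. {i,j} \<in> E \<longrightarrow> {C i - pt i..<C i} \<inter> {C j - pt j..<C j} = {}"
    and C3: "\<forall>j\<in>{1..n}. \<forall>c<C j. c < pt j \<or> (\<exists>i\<in>{1..n}. {i,j} \<in> E \<and> {c - pt j..<c} \<inter> {C i - pt i..<C i} \<noteq> {})"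
    using sched[OF _ ptb deg noloop] by blast
  have feas: "feasible_schedule n pt E C"
    unfolding feasible_schedule_def using C1 C2 Ein by blast
  have minl: "minimal_schedule n pt E C"
    unfolding minimal_schedule_def
  proof (intro conjI feas ballI allI impI notI)
    fix j d assume j: "j \<in> {1..n}" and d: "0 < d \<and> d \<le> C j"
      and f: "feasible_schedule n pt E (C(j := C j - d))"
    let ?C = "C(j := C j - d)"
    have "C j - d < C j" using d by simp
    then have "C j - d < pt j \<or> (\<exists>i\<in>{1..n}. {i,j} \<in> E \<and> {(C j - d) - pt j..<C j - d} \<inter> {C i - pt i..<C i} \<noteq> {})"
      using C3 j by blast
    then show False
    proof
      assume "C j - d < pt j"
      moreover have "pt j \<le> ?C j" using f j unfolding feasible_schedule_def by blast
      ultimately show False by simp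
    next
      assume "\<exists>i\<in>{1..n}. {i,j} \<in> E \<and> {(C j - d) - pt j..<C j - d} \<inter> {C i - pt i..<C i} \<noteq> {}"
      then obtain i where i: "{i,j} \<in> E" "{(C j - d) - pt j..<C j - d} \<inter> {C i - pt i..<C i} \<noteq> {}" by blast
      have "i \<noteq> j" using i(1) noloop by auto
      then have "?C i = C i" "?C j = C j - d" by auto
      moreover have "{?C i - pt i..<?C i} \<inter> {?C j - pt j..<?C j} = {}"
        using f i(1) unfolding feasible_schedule_def by blast
      ultimately show False using i(2) by (simp add: Int_commute)
    qed
  qed
  have ms: "makespan n C \<le> (2*k+1)*p"
    unfolding makespan_def using C1 n2 by (subst Max_le_iff) auto
  have lg: "1 \<le> log 2 (real n)" using n2 by simp
  have "real (makespan n C) \<le> real ((2*k+1)*p)" using ms by linarith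
  also have "\<dots> \<le> 2 * real (k + 1) * real p" by (simp add: algebra_simps)
  also have "\<dots> \<le> 2 * real (k + 1) * real p * log 2 (real n)"
    using mult_left_mono[OF lg, of "2 * real (k + 1) * real p"] by simp
  finally show "\<exists>C. minimal_schedule n pt E C \<and>
          real (makespan n C) \<le> 2 * real (treewidth {1..n} E + 1) * real p * log 2 (real n)"
    using minl by (auto simp: k_def)
qed

end
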